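(* Let $x \in \mathbb{R}^n$ be a deterministic clean signal, $y \in \mathbb{R}^n$ a deterministic vector of noisy data, and $f:\mathbb{R}^n \to \mathbb{R}^n$ a denoiser. Let $\tilde a, \tilde b, \tilde c$ be random vectors in $\mathbb{R}^n$ (the noisy references) such that (1) all entries of $\tilde a, \tilde b, \tilde c$ (i.e. the $3n$ random variables $\tilde a_i, \tilde b_i, \tilde c_i$, $1\le i\le n$) are mutually independent; (2) $\mathbb{E}[\tilde a_i] = \mathbb{E}[\tilde b_i] = \mathbb{E}[\tilde c_i] = x_i$ for $1 \le i \le n$; and, for each $i$, $\tilde a_i, \tilde b_i, \tilde c_i$ have the same finite variance. Define $$\mathrm{MSE} := \frac{1}{n}\sum_{i=1}^n (x_i - f(y)_i)^2, \qquad \widetilde{\mathrm{uMSE}} := \frac{1}{n}\sum_{i=1}^n \left[(\tilde a_i - f(y)_i)^2 - \frac{(\tilde b_i - \tilde c_i)^2}{2}\right].$$ Then $\mathbb{E}[\widetilde{\mathrm{uMSE}}] = \mathrm{MSE}$.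
   Context: The clean signal $x$, the data $y$ and hence the denoised estimate $f(y)$ are deterministic; only the references $\tilde a,\tilde b,\tilde c$ are random. *)

theory Defs
  imports "HOL-Analysis.Analysis" "HOL-Probability.Probability"
begin

text \<open>The 3n reference entries indexed by a sum type: Inl i is the i-th entry of a,
  Inr (Inl i) of b, Inr (Inr i) of c.\<close>
definition ref_entries ::
  "('m \<Rightarrow> real ^ 'n) \<Rightarrow> ('m \<Rightarrow> real ^ 'n) \<Rightarrow> ('m \<Rightarrow> real ^ 'n) \<Rightarrow> ('n + 'n + 'n) \<Rightarrow> 'm \<Rightarrow> real"
  where "ref_entries a b c k \<omega> = (case k of Inl i \<Rightarrow> a \<omega> $ i | Inr (Inl i) \<Rightarrow> b \<omega> $ i | Inr (Inr i) \<Rightarrow> c \<omega> $ i)"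

end

theory Submission
  imports Defs
begin

theorem theorem4p1:
  fixes M :: "'m measure"
    and x y :: "real ^ 'n"
    and f :: "real ^ 'n \<Rightarrow> real ^ 'n"
    and a b c :: "'m \<Rightarrow> real ^ 'n"
  assumes "prob_space M"
    and indep: "prob_space.indep_vars M (\<lambda>_. borel) (ref_entries a b c) UNIV"
    and int_a: "\<And>i. integrable M (\<lambda>\<omega>. a \<omega> $ i)"
    and int_b: "\<And>i. integrable M (\<lambda>\<omega>. b \<omega> $ i)"
    and int_c: "\<And>i. integrable M (\<lambda>\<omega>. c \<omega> $ i)"
    and sq_a: "\<And>i. integrable M (\<lambda>\<omega>. (a \<omega> $ i)\<^sup>2)"
    and sq_b: "\<And>i. integrable M (\<lambda>\<omega>. (b \<omega> $ i)\<^sup>2)"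
    and sq_c: "\<And>i. integrable M (\<lambda>\<omega>. (c \<omega> $ i)\<^sup>2)"
    and mean_a: "\<And>i. prob_space.expectation M (\<lambda>\<omega>. a \<omega> $ i) = x $ i"
    and mean_b: "\<And>i. prob_space.expectation M (\<lambda>\<omega>. b \<omega> $ i) = x $ i"
    and mean_c: "\<And>i. prob_space.expectation M (\<lambda>\<omega>. c \<omega> $ i) = x $ i"
    and var_ab: "\<And>i. prob_space.variance M (\<lambda>\<omega>. a \<omega> $ i) = prob_space.variance M (\<lambda>\<omega>. b \<omega> $ i)"
    and var_ac: "\<And>i. prob_space.variance M (\<lambda>\<omega>. a \<omega> $ i) = prob_space.variance M (\<lambda>\<omega>. c \<omega> $ i)"
  shows "prob_space.expectation M
           (\<lambda>\<omega>. (1 / real CARD('n)) *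
              (\<Sum>i\<in>UNIV. (a \<omega> $ i - f y $ i)\<^sup>2 - (b \<omega> $ i - c \<omega> $ i)\<^sup>2 / 2))
         = (1 / real CARD('n)) * (\<Sum>i\<in>UNIV. (x $ i - f y $ i)\<^sup>2)"
proof -
  interpret P: prob_space M by fact
  have rb: "ref_entries a b c (Inr (Inl i)) = (\<lambda>\<omega>. b \<omega> $ i)" for i
    by (rule ext) (simp add: ref_entries_def)
  have rc: "ref_entries a b c (Inr (Inr i)) = (\<lambda>\<omega>. c \<omega> $ i)" for i
    by (rule ext) (simp add: ref_entries_def)
  let ?E = "P.expectation"
  have bc: "?E (\<lambda>\<omega>. b \<omega> $ i * c \<omega> $ i) = x $ i * x $ i" for i
  proof -
    let ?I = "{Inr (Inl i), Inr (Inr i)} :: ('n + 'n + 'n) set"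
    have ind: "P.indep_vars (\<lambda>_. borel) (ref_entries a b c) ?I"
      by (rule P.indep_vars_subset[OF indep]) auto
    have integ: "\<And>k. k \<in> ?I \<Longrightarrow> integrable M (ref_entries a b c k)"
      using int_b int_c by (auto simp: rb rc)
    have "?E (\<lambda>\<omega>. \<Prod>k\<in>?I. ref_entries a b c k \<omega>) = (\<Prod>k\<in>?I. ?E (ref_entries a b c k))"
      by (rule P.indep_vars_lebesgue_integral[OF _ ind integ]) auto
    then show ?thesis
      by (simp add: ref_entries_def rb rc mean_b mean_c)
  qed
  have bcint: "integrable M (\<lambda>\<omega>. b \<omega> $ i * c \<omega> $ i)" for i
  proof -
    let ?I = "{Inr (Inl i), Inr (Inr i)} :: ('n + 'n + 'n) set"
    have ind: "P.indep_vars (\<lambda>_. borel) (ref_entries a b c) ?I"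
      by (rule P.indep_vars_subset[OF indep]) auto
    have integ: "\<And>k. k \<in> ?I \<Longrightarrow> integrable M (ref_entries a b c k)"
      using int_b int_c by (auto simp: rb rc)
    have "integrable M (\<lambda>\<omega>. \<Prod>k\<in>?I. ref_entries a b c k \<omega>)"
      by (rule P.indep_vars_integrable[OF _ ind integ]) auto
    then show ?thesis
      by (simp add: ref_entries_def)
  qed
  have va: "P.variance (\<lambda>\<omega>. a \<omega> $ i) = ?E (\<lambda>\<omega>. (a \<omega> $ i)\<^sup>2) - (x $ i)\<^sup>2" for i
    using P.variance_eq[OF int_a sq_a] mean_a by simp
  have vb: "P.variance (\<lambda>\<omega>. b \<omega> $ i) = ?E (\<lambda>\<omega>. (b \<omega> $ i)\<^sup>2) - (x $ i)\<^sup>2" for i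
    using P.variance_eq[OF int_b sq_b] mean_b by simp
  have vc: "P.variance (\<lambda>\<omega>. c \<omega> $ i) = ?E (\<lambda>\<omega>. (c \<omega> $ i)\<^sup>2) - (x $ i)\<^sup>2" for i
    using P.variance_eq[OF int_c sq_c] mean_c by simp
  have term_i: "?E (\<lambda>\<omega>. (a \<omega> $ i - f y $ i)\<^sup>2 - (b \<omega> $ i - c \<omega> $ i)\<^sup>2 / 2)
      = (x $ i - f y $ i)\<^sup>2" for i
  proof -
    have e1: "(\<lambda>\<omega>. (a \<omega> $ i - f y $ i)\<^sup>2 - (b \<omega> $ i - c \<omega> $ i)\<^sup>2 / 2) =
      (\<lambda>\<omega>. (a \<omega> $ i)\<^sup>2 + (- 2 * f y $ i) * a \<omega> $ i + (f y $ i)\<^sup>2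
          - (1/2) * (b \<omega> $ i)\<^sup>2 - (1/2) * (c \<omega> $ i)\<^sup>2 + b \<omega> $ i * c \<omega> $ i)"
      by (rule ext) (simp add: power2_eq_square field_simps)
    have "?E (\<lambda>\<omega>. (a \<omega> $ i)\<^sup>2 + (- 2 * f y $ i) * a \<omega> $ i + (f y $ i)\<^sup>2
          - (1/2) * (b \<omega> $ i)\<^sup>2 - (1/2) * (c \<omega> $ i)\<^sup>2 + b \<omega> $ i * c \<omega> $ i)
       = ?E (\<lambda>\<omega>. (a \<omega> $ i)\<^sup>2) + (- 2 * f y $ i) * ?E (\<lambda>\<omega>. a \<omega> $ i) + (f y $ i)\<^sup>2
          - (1/2) * ?E (\<lambda>\<omega>. (b \<omega> $ i)\<^sup>2) - (1/2) * ?E (\<lambda>\<omega>. (c \<omega> $ i)\<^sup>2)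
          + ?E (\<lambda>\<omega>. b \<omega> $ i * c \<omega> $ i)"
      using int_a sq_a sq_b sq_c bcint P.prob_space
      by (simp add: Bochner_Integration.integral_add Bochner_Integration.integral_diff)
    then show ?thesis
      unfolding e1 using va[of i] vb[of i] vc[of i] var_ab[of i] var_ac[of i] bc[of i] mean_a[of i]
      by (simp add: power2_eq_square algebra_simps)
  qed
  have "?E (\<lambda>\<omega>. (1 / real CARD('n)) *
              (\<Sum>i\<in>UNIV. (a \<omega> $ i - f y $ i)\<^sup>2 - (b \<omega> $ i - c \<omega> $ i)\<^sup>2 / 2))
     = (1 / real CARD('n)) * (\<Sum>i\<in>UNIV. ?E (\<lambda>\<omega>. (a \<omega> $ i - f y $ i)\<^sup>2 - (b \<omega> $ i - c \<omega> $ i)\<^sup>2 / 2))"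
  proof -
    have "\<And>i. integrable M (\<lambda>\<omega>. (a \<omega> $ i - f y $ i)\<^sup>2 - (b \<omega> $ i - c \<omega> $ i)\<^sup>2 / 2)"
    proof -
      fix i
      have e1: "(\<lambda>\<omega>. (a \<omega> $ i - f y $ i)\<^sup>2 - (b \<omega> $ i - c \<omega> $ i)\<^sup>2 / 2) =
        (\<lambda>\<omega>. (a \<omega> $ i)\<^sup>2 + (- 2 * f y $ i) * a \<omega> $ i + (f y $ i)\<^sup>2
            - (1/2) * (b \<omega> $ i)\<^sup>2 - (1/2) * (c \<omega> $ i)\<^sup>2 + b \<omega> $ i * c \<omega> $ i)"
        by (rule ext) (simp add: power2_eq_square field_simps)
      show "integrable M (\<lambda>\<omega>. (a \<omega> $ i - f y $ i)\<^sup>2 - (b \<omega> $ i - c \<omega> $ i)\<^sup>2 / 2)"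
        unfolding e1 using int_a sq_a sq_b sq_c bcint by simp
    qed
    then show ?thesis by (simp add: Bochner_Integration.integral_sum)
  qed
  then show ?thesis using term_i by simp
qed

end
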